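(* Let $G=(V,E)$ be a finite graph, $C$ a finite set, and $\pi(\sigma)=\frac1Z\prod_{(v,w)\in E}\alpha_{vw}(\sigma(v),\sigma(w))$ a probability distribution on $C^V$ (with $\alpha_{vw}\ge 0$ and $Z$ a normalizing constant), with support $\mathcal{S}\subseteq C^V$. Let $\mathcal{G}=(\mathcal{V},\mathcal{E})$ be the transition graph with $\mathcal{V}=\mathcal{S}$ and $(\sigma,\sigma')\in\mathcal{E}$ iff $\sigma,\sigma'$ differ in at most one node of $V$. For $\sigma\in\mathcal{S}$, $v\in V$, $a\in C$ let $\sigma_v^a$ be the configuration equal to $\sigma$ off $v$ and equal to $a$ at $v$, and let $$K(\sigma,\sigma_v^a)=\frac{\prod_{w:(v,w)\in E}\alpha_{vw}(a,\sigma(w))}{\sum_{a'\in C}\prod_{w:(v,w)\in E}\alpha_{vw}(a',\sigma(w))}.$$ For a probability distribution $\rho$ on $V$ (the rates), let $P_\rho$ be the Markov chain on $\mathcal{S}$ that at each step picks $v\in V$ with probability $\rho(v)$ and moves from $\sigma$ to $\sigma_v^a$ with probability $K(\sigma,\sigma_v^a)$; let $U$ denote the uniform distribution on $V$. Let $\Gamma$ be a set of paths $\gamma_{\sigma\sigma'}$ in $\mathcal{G}$, one for each pair $\sigma,\sigma'\in\mathcal{S}$, and for an edge $e$ and a chain $P$ set $$\frac{W(e)}{Q_P(e)},\qquad W(e)=\sum_{\gamma_{\sigma\sigma'}\ni e}\pi(\sigma)\pi(\sigma')|\gamma_{\sigma\sigma'}|,\qquad Q_P(\sigma,\tau)=\pi(\sigma)P(\sigma,\tau),$$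 where $|\gamma|$ is the number of edges of $\gamma$. Suppose that for each $v\in V$ there is a number $B_v>0$ such that $W(e)/Q_{P_U}(e)\le B_v$ for every edge $e$ of $\mathcal{G}$ of the form $(\sigma,\sigma_v^a)$ with $\sigma_v^a\ne\sigma$. Then $$\tau_2(P_U)\le\max_{v\in V}B_v,\qquad\text{and}\qquad \tau_2(P_{\tilde\rho})\le |V|^{-1}\sum_{v\in V}B_v,$$ where $\tilde\rho(v)=B_v/\sum_{u\in V}B_u$.
   Context: For a $\pi$-reversible transition matrix $P$, $\lambda_2(P)$ is its second largest eigenvalue and $\tau_2(P)=1/(1-\lambda_2(P))$ is its relaxation time. The chain $P_\rho$ is $\pi$-reversible; explicitly, for $\tau\ne\sigma$ differing from $\sigma$ only at node $v$, $P_\rho(\sigma,\tau)=\rho(v)K(\sigma,\tau)$, and the remaining mass stays at $\sigma$. *)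

theory Defs
  imports Complex_Main
begin

(* Nodes: finite type 'v (V = UNIV); colours: finite type 'c (C = UNIV).
   Configurations: functions 'v => 'c.  E is a set of ordered pairs of nodes. *)

definition weight :: "('v \<times> 'v) set \<Rightarrow> ('v \<Rightarrow> 'v \<Rightarrow> 'c \<Rightarrow> 'c \<Rightarrow> real) \<Rightarrow> ('v \<Rightarrow> 'c) \<Rightarrow> real" where
  "weight E \<alpha> \<sigma> = (\<Prod>(v, w)\<in>E. \<alpha> v w (\<sigma> v) (\<sigma> w))"

definition partition_fn :: "('v::finite \<times> 'v) set \<Rightarrow> ('v \<Rightarrow> 'v \<Rightarrow> 'c::finite \<Rightarrow> 'c \<Rightarrow> real) \<Rightarrow> real" where
  "partition_fn E \<alpha> = (\<Sum>\<sigma>\<in>(UNIV :: ('v \<Rightarrow> 'c) set). weight E \<alpha> \<sigma>)"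

definition gibbs :: "('v::finite \<times> 'v) set \<Rightarrow> ('v \<Rightarrow> 'v \<Rightarrow> 'c::finite \<Rightarrow> 'c \<Rightarrow> real) \<Rightarrow> ('v \<Rightarrow> 'c) \<Rightarrow> real" where
  "gibbs E \<alpha> \<sigma> = weight E \<alpha> \<sigma> / partition_fn E \<alpha>"

definition supp :: "('v::finite \<times> 'v) set \<Rightarrow> ('v \<Rightarrow> 'v \<Rightarrow> 'c::finite \<Rightarrow> 'c \<Rightarrow> real) \<Rightarrow> ('v \<Rightarrow> 'c) set" where
  "supp E \<alpha> = {\<sigma>. gibbs E \<alpha> \<sigma> > 0}"

definition cond_weight :: "('v \<times> 'v) set \<Rightarrow> ('v \<Rightarrow> 'v \<Rightarrow> 'c \<Rightarrow> 'c \<Rightarrow> real) \<Rightarrow> 'v \<Rightarrow> 'c \<Rightarrow> ('v \<Rightarrow> 'c) \<Rightarrow> real" where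
  "cond_weight E \<alpha> v a \<sigma> =
     (\<Prod>(x, y)\<in>{e\<in>E. fst e = v \<or> snd e = v}. \<alpha> x y ((\<sigma>(v := a)) x) ((\<sigma>(v := a)) y))"

definition heatbath :: "('v \<times> 'v) set \<Rightarrow> ('v \<Rightarrow> 'v \<Rightarrow> 'c::finite \<Rightarrow> 'c \<Rightarrow> real) \<Rightarrow> ('v \<Rightarrow> 'c) \<Rightarrow> 'v \<Rightarrow> 'c \<Rightarrow> real" where
  "heatbath E \<alpha> \<sigma> v a = cond_weight E \<alpha> v a \<sigma> / (\<Sum>a'\<in>UNIV. cond_weight E \<alpha> v a' \<sigma>)"

definition glauber_off :: "('v::finite \<times> 'v) set \<Rightarrow> ('v \<Rightarrow> 'v \<Rightarrow> 'c::finite \<Rightarrow> 'c \<Rightarrow> real) \<Rightarrow> ('v \<Rightarrow> real) \<Rightarrow> ('v \<Rightarrow> 'c) \<Rightarrow> ('v \<Rightarrow> 'c) \<Rightarrow> real" where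
  "glauber_off E \<alpha> \<rho> \<sigma> \<tau> =
     (if card {v. \<tau> v \<noteq> \<sigma> v} = 1
      then (let v = (THE v. \<tau> v \<noteq> \<sigma> v) in \<rho> v * heatbath E \<alpha> \<sigma> v (\<tau> v))
      else 0)"

definition glauber :: "('v::finite \<times> 'v) set \<Rightarrow> ('v \<Rightarrow> 'v \<Rightarrow> 'c::finite \<Rightarrow> 'c \<Rightarrow> real) \<Rightarrow> ('v \<Rightarrow> real) \<Rightarrow> ('v \<Rightarrow> 'c) \<Rightarrow> ('v \<Rightarrow> 'c) \<Rightarrow> real" where
  "glauber E \<alpha> \<rho> \<sigma> \<tau> =
     (if \<tau> = \<sigma> then 1 - (\<Sum>\<tau>'\<in>UNIV - {\<sigma>}. glauber_off E \<alpha> \<rho> \<sigma> \<tau>')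
      else glauber_off E \<alpha> \<rho> \<sigma> \<tau>)"

definition uniform_rate :: "'v::finite \<Rightarrow> real" where
  "uniform_rate v = 1 / real (card (UNIV :: 'v set))"

definition is_eigenvector :: "'s set \<Rightarrow> ('s \<Rightarrow> 's \<Rightarrow> real) \<Rightarrow> real \<Rightarrow> ('s \<Rightarrow> real) \<Rightarrow> bool" where
  "is_eigenvector S P l f \<longleftrightarrow> (\<exists>\<sigma>\<in>S. f \<sigma> \<noteq> 0) \<and> (\<forall>\<sigma>\<in>S. (\<Sum>\<tau>\<in>S. P \<sigma> \<tau> * f \<tau>) = l * f \<sigma>)"

definition is_eigenvalue :: "'s set \<Rightarrow> ('s \<Rightarrow> 's \<Rightarrow> real) \<Rightarrow> real \<Rightarrow> bool" where
  "is_eigenvalue S P l \<longleftrightarrow> (\<exists>f. is_eigenvector S P l f)"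

definition lambda1 :: "'s set \<Rightarrow> ('s \<Rightarrow> 's \<Rightarrow> real) \<Rightarrow> real" where
  "lambda1 S P = Max {l. is_eigenvalue S P l}"

definition mult_ge2 :: "'s set \<Rightarrow> ('s \<Rightarrow> 's \<Rightarrow> real) \<Rightarrow> real \<Rightarrow> bool" where
  "mult_ge2 S P l \<longleftrightarrow> (\<exists>f g. is_eigenvector S P l f \<and> is_eigenvector S P l g \<and>
       (\<forall>a b. (\<forall>\<sigma>\<in>S. a * f \<sigma> + b * g \<sigma> = 0) \<longrightarrow> a = 0 \<and> b = 0))"

(* second largest eigenvalue, counted with multiplicity *)
definition lambda2 :: "'s set \<Rightarrow> ('s \<Rightarrow> 's \<Rightarrow> real) \<Rightarrow> real" where
  "lambda2 S P = (if mult_ge2 S P (lambda1 S P) then lambda1 S P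
                  else Max ({l. is_eigenvalue S P l} - {lambda1 S P}))"

definition tau2 :: "'s set \<Rightarrow> ('s \<Rightarrow> 's \<Rightarrow> real) \<Rightarrow> real" where
  "tau2 S P = 1 / (1 - lambda2 S P)"

definition trans_edge :: "('v \<Rightarrow> 'c) set \<Rightarrow> ('v \<Rightarrow> 'c) \<Rightarrow> ('v \<Rightarrow> 'c) \<Rightarrow> bool" where
  "trans_edge S \<sigma> \<tau> \<longleftrightarrow> \<sigma> \<in> S \<and> \<tau> \<in> S \<and> (\<exists>v. \<tau> = \<sigma>(v := \<tau> v))"

definition is_path :: "('v \<Rightarrow> 'c) set \<Rightarrow> ('v \<Rightarrow> 'c) \<Rightarrow> ('v \<Rightarrow> 'c) \<Rightarrow> ('v \<Rightarrow> 'c) list \<Rightarrow> bool" where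
  "is_path S \<sigma> \<sigma>' \<gamma> \<longleftrightarrow> \<gamma> \<noteq> [] \<and> hd \<gamma> = \<sigma> \<and> last \<gamma> = \<sigma>' \<and> distinct \<gamma> \<and> set \<gamma> \<subseteq> S \<and>
      (\<forall>i. Suc i < length \<gamma> \<longrightarrow> trans_edge S (\<gamma> ! i) (\<gamma> ! Suc i))"

definition path_edges :: "'a list \<Rightarrow> ('a \<times> 'a) set" where
  "path_edges \<gamma> = set (zip \<gamma> (tl \<gamma>))"

definition path_len :: "'a list \<Rightarrow> nat" where
  "path_len \<gamma> = length \<gamma> - 1"

definition congestion :: "('v::finite \<times> 'v) set \<Rightarrow> ('v \<Rightarrow> 'v \<Rightarrow> 'c::finite \<Rightarrow> 'c \<Rightarrow> real) \<Rightarrow>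
    (('v \<Rightarrow> 'c) \<Rightarrow> ('v \<Rightarrow> 'c) \<Rightarrow> ('v \<Rightarrow> 'c) list) \<Rightarrow> ('v \<Rightarrow> 'c) \<times> ('v \<Rightarrow> 'c) \<Rightarrow> real" where
  "congestion E \<alpha> \<Gamma> e =
     (\<Sum>p\<in>{p\<in>supp E \<alpha> \<times> supp E \<alpha>. e \<in> path_edges (\<Gamma> (fst p) (snd p))}.
        gibbs E \<alpha> (fst p) * gibbs E \<alpha> (snd p) * real (path_len (\<Gamma> (fst p) (snd p))))"

definition edge_flow :: "('v::finite \<times> 'v) set \<Rightarrow> ('v \<Rightarrow> 'v \<Rightarrow> 'c::finite \<Rightarrow> 'c \<Rightarrow> real) \<Rightarrow>
    (('v \<Rightarrow> 'c) \<Rightarrow> ('v \<Rightarrow> 'c) \<Rightarrow> real) \<Rightarrow> ('v \<Rightarrow> 'c) \<times> ('v \<Rightarrow> 'c) \<Rightarrow> real" where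
  "edge_flow E \<alpha> P e = gibbs E \<alpha> (fst e) * P (fst e) (snd e)"

end

theory Submission
  imports Defs "HOL-Analysis.Analysis"
begin


definition pin :: "'s set \<Rightarrow> ('s\<Rightarrow>real) \<Rightarrow> ('s\<Rightarrow>real) \<Rightarrow> ('s\<Rightarrow>real) \<Rightarrow> real" where
  "pin S p f g = (\<Sum>x\<in>S. p x * f x * g x)"
definition Pf :: "'s set \<Rightarrow> ('s\<Rightarrow>'s\<Rightarrow>real) \<Rightarrow> ('s\<Rightarrow>real) \<Rightarrow> 's \<Rightarrow> real" where
  "Pf S P f = (\<lambda>x. \<Sum>y\<in>S. P x y * f y)"
definition dir :: "'s set \<Rightarrow> ('s\<Rightarrow>real) \<Rightarrow> ('s\<Rightarrow>'s\<Rightarrow>real) \<Rightarrow> ('s\<Rightarrow>real) \<Rightarrow> real" where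
  "dir S p P f = (\<Sum>x\<in>S. \<Sum>y\<in>S. p x * P x y * (f x - f y)^2) / 2"

lemma pin_Pf_sym:
  assumes rev: "\<And>x y. x\<in>S \<Longrightarrow> y\<in>S \<Longrightarrow> p x * P x y = p y * P y x"
  shows "pin S p (Pf S P f) g = pin S p f (Pf S P g)"
proof -
  have "pin S p (Pf S P f) g = (\<Sum>x\<in>S. \<Sum>y\<in>S. p x * P x y * f y * g x)"
    unfolding pin_def Pf_def by (simp add: sum_distrib_left sum_distrib_right mult.commute mult.left_commute)
  also have "\<dots> = (\<Sum>x\<in>S. \<Sum>y\<in>S. p y * P y x * f y * g x)"
    by (intro sum.cong refl) (simp add: rev)
  also have "\<dots> = (\<Sum>y\<in>S. \<Sum>x\<in>S. p y * P y x * f y * g x)"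
    by (rule sum.swap)
  also have "\<dots> = pin S p f (Pf S P g)"
    unfolding pin_def Pf_def by (simp add: sum_distrib_left sum_distrib_right mult.commute mult.left_commute)
  finally show ?thesis .
qed

lemma Pf_one:
  assumes rows: "\<And>x. x\<in>S \<Longrightarrow> (\<Sum>y\<in>S. P x y) = 1"
  shows "x \<in> S \<Longrightarrow> Pf S P (\<lambda>_. 1) x = 1"
  using rows by (simp add: Pf_def)

lemma pin_cong: "(\<And>x. x\<in>S \<Longrightarrow> f x = f' x) \<Longrightarrow> (\<And>x. x\<in>S \<Longrightarrow> g x = g' x) \<Longrightarrow> pin S p f g = pin S p f' g'"
  unfolding pin_def by (intro sum.cong) auto

lemma stationary:
  assumes rev: "\<And>x y. x\<in>S \<Longrightarrow> y\<in>S \<Longrightarrow> p x * P x y = p y * P y x"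
    and rows: "\<And>x. x\<in>S \<Longrightarrow> (\<Sum>y\<in>S. P x y) = 1"
  shows "pin S p (Pf S P f) (\<lambda>_. 1) = pin S p f (\<lambda>_. 1)"
proof -
  have "pin S p (Pf S P f) (\<lambda>_. 1) = pin S p f (Pf S P (\<lambda>_. 1))" by (rule pin_Pf_sym[OF rev])
  also have "\<dots> = pin S p f (\<lambda>_. 1)" by (rule pin_cong) (auto simp: Pf_one[OF rows])
  finally show ?thesis .
qed

lemma dir_eq:
  assumes rev: "\<And>x y. x\<in>S \<Longrightarrow> y\<in>S \<Longrightarrow> p x * P x y = p y * P y x"
    and rows: "\<And>x. x\<in>S \<Longrightarrow> (\<Sum>y\<in>S. P x y) = 1"
  shows "dir S p P f = pin S p f f - pin S p (Pf S P f) f"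
proof -
  have e: "(\<Sum>x\<in>S. \<Sum>y\<in>S. p x * P x y * (f x - f y)^2) =
     (\<Sum>x\<in>S. \<Sum>y\<in>S. p x * P x y * (f x)^2) + (\<Sum>x\<in>S. \<Sum>y\<in>S. p x * P x y * (f y)^2)
      - 2 * (\<Sum>x\<in>S. \<Sum>y\<in>S. p x * P x y * f x * f y)"
    by (simp add: sum_subtractf sum.distrib sum_distrib_left power2_diff algebra_simps)
  have a: "(\<Sum>x\<in>S. \<Sum>y\<in>S. p x * P x y * (f x)^2) = pin S p f f"
    unfolding pin_def using rows by (simp add: sum_distrib_right[symmetric] sum_distrib_left[symmetric] power2_eq_square mult.assoc)
  have "(\<Sum>x\<in>S. \<Sum>y\<in>S. p x * P x y * (f y)^2) = (\<Sum>x\<in>S. \<Sum>y\<in>S. p y * P y x * (f y)^2)"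
    by (intro sum.cong refl) (simp add: rev)
  also have "\<dots> = (\<Sum>y\<in>S. \<Sum>x\<in>S. p y * P y x * (f y)^2)" by (rule sum.swap)
  also have "\<dots> = pin S p f f"
    unfolding pin_def using rows by (simp add: sum_distrib_right[symmetric] sum_distrib_left[symmetric] power2_eq_square mult.assoc)
  finally have b: "(\<Sum>x\<in>S. \<Sum>y\<in>S. p x * P x y * (f y)^2) = pin S p f f" .
  have c: "(\<Sum>x\<in>S. \<Sum>y\<in>S. p x * P x y * f x * f y) = pin S p (Pf S P f) f"
    unfolding pin_def Pf_def by (simp add: sum_distrib_left sum_distrib_right mult.commute mult.left_commute)
  show ?thesis unfolding dir_def e a b c by simp
qed



lemma pin_pos:
  assumes "finite S" "\<And>x. x\<in>S \<Longrightarrow> p x > 0" "x0 \<in> S" "f x0 \<noteq> 0"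
  shows "pin S p f f > 0"
proof -
  have "f x0 * f x0 > 0" using assms(4) by (cases "f x0 > 0") (auto simp: mult_neg_neg)
  hence "0 < p x0 * f x0 * f x0" using assms(2,3) by (simp add: mult.assoc)
  also have "\<dots> \<le> pin S p f f" unfolding pin_def
  proof (rule member_le_sum)
    fix x assume "x \<in> S - {x0}"
    hence "p x \<ge> 0" using assms(2) by (simp add: less_imp_le)
    thus "0 \<le> p x * f x * f x" by (simp add: mult.assoc)
  qed (use assms in auto)
  finally show ?thesis .
qed

lemma pin_nonneg:
  assumes "\<And>x. x\<in>S \<Longrightarrow> p x \<ge> 0"
  shows "pin S p f f \<ge> 0"
  unfolding pin_def by (rule sum_nonneg) (use assms in \<open>auto simp: mult.assoc\<close>)

lemma pin_zero_imp:
  assumes "finite S" "\<And>x. x\<in>S \<Longrightarrow> p x > 0" "pin S p f f = 0" "x \<in> S"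
  shows "f x = 0"
  using pin_pos[OF assms(1,2) assms(4)] assms(3) by force

lemma eig_bound:
  assumes fin: "finite S" and pos: "\<And>x. x\<in>S \<Longrightarrow> p x > 0"
    and rev: "\<And>x y. x\<in>S \<Longrightarrow> y\<in>S \<Longrightarrow> p x * P x y = p y * P y x"
    and rows: "\<And>x. x\<in>S \<Longrightarrow> (\<Sum>y\<in>S. P x y) = 1"
    and Cpos: "C > 0"
    and poinc: "\<And>f. pin S p f (\<lambda>_. 1) = 0 \<Longrightarrow> pin S p f f \<le> C * dir S p P f"
    and ev: "\<And>x. x\<in>S \<Longrightarrow> Pf S P f x = l * f x"
    and nz: "x0 \<in> S" "f x0 \<noteq> 0"
    and mean: "pin S p f (\<lambda>_. 1) = 0"
  shows "l \<le> 1 - 1 / C"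
proof -
  have N: "pin S p f f > 0" by (rule pin_pos[of S p x0 f, OF fin pos nz])
  have "pin S p (Pf S P f) f = pin S p (\<lambda>x. l * f x) f" by (rule pin_cong) (auto simp: ev)
  also have "\<dots> = l * pin S p f f" unfolding pin_def by (simp add: sum_distrib_left mult.assoc mult.left_commute)
  finally have q: "pin S p (Pf S P f) f = l * pin S p f f" .
  have "pin S p f f \<le> C * ((1 - l) * pin S p f f)"
    using poinc[OF mean] dir_eq[OF rev rows, of f] q by (simp add: algebra_simps)
  hence "1 \<le> C * (1 - l)" using N by (simp add: mult.commute mult.left_commute)
  hence "1 / C \<le> 1 - l" using Cpos by (simp add: divide_simps mult.commute)
  thus ?thesis by simp
qed

lemma quad_zero:
  fixes a b :: real
  assumes "\<And>t. a * t + b * t^2 \<le> 0"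
  shows "a = 0"
proof (rule ccontr)
  assume a: "a \<noteq> 0"
  define s where "s = \<bar>b\<bar> + 1"
  have s: "s > 0" "\<bar>b\<bar> < s" unfolding s_def by auto
  define t where "t = a / (2 * s)"
  have "a * t + b * t^2 = t * (a + b * t)" by (simp add: power2_eq_square algebra_simps)
  also have "\<dots> = a^2 / (2 * s) + b * a^2 / (4 * s^2)" unfolding t_def using s
    by (simp add: field_simps power2_eq_square)
  also have "\<dots> = a^2 / (4 * s^2) * (2 * s + b)" using s by (simp add: field_simps power2_eq_square)
  also have "\<dots> > 0" using s a by (intro mult_pos_pos) auto
  finally show False using assms[of t] by simp
qed



lemma pin_add_left: "pin S p (\<lambda>x. f x + t * g x) h = pin S p f h + t * pin S p g h"
  unfolding pin_def by (simp add: sum.distrib sum_distrib_left algebra_simps)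
lemma pin_add_right: "pin S p h (\<lambda>x. f x + t * g x) = pin S p h f + t * pin S p h g"
  unfolding pin_def by (simp add: sum.distrib sum_distrib_left algebra_simps)
lemma pin_comm: "pin S p f g = pin S p g f"
  unfolding pin_def by (simp add: algebra_simps)
lemma pin_scale_left: "pin S p (\<lambda>x. c * f x) g = c * pin S p f g"
  unfolding pin_def by (simp add: sum_distrib_left algebra_simps)
lemma pin_scale_right: "pin S p g (\<lambda>x. c * f x) = c * pin S p g f"
  unfolding pin_def by (simp add: sum_distrib_left algebra_simps)
lemma Pf_add: "Pf S P (\<lambda>x. f x + t * g x) = (\<lambda>x. Pf S P f x + t * Pf S P g x)"
  unfolding Pf_def by (simp add: sum.distrib sum_distrib_left algebra_simps)
lemma Pf_scale: "Pf S P (\<lambda>x. c * f x) = (\<lambda>x. c * Pf S P f x)"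
  unfolding Pf_def by (simp add: sum_distrib_left algebra_simps)
lemma Pf_cong: "(\<And>x. x\<in>S \<Longrightarrow> f x = g x) \<Longrightarrow> Pf S P f = Pf S P g"
  unfolding Pf_def by (intro ext sum.cong) auto

definition emb :: "'s::finite set \<Rightarrow> ('s\<Rightarrow>real) \<Rightarrow> ('s\<Rightarrow>real) \<Rightarrow> real^'s" where
  "emb S p f = (\<chi> x. if x\<in>S then sqrt (p x) * f x else 0)"

lemma inner_emb:
  assumes "\<And>x. x\<in>S \<Longrightarrow> p x \<ge> 0"
  shows "inner (emb S p f) (emb S p g) = pin S p f g"
proof -
  have "inner (emb S p f) (emb S p g) = (\<Sum>x\<in>UNIV. if x \<in> S then p x * f x * g x else 0)"
    unfolding inner_vec_def emb_def using assms
    by (intro sum.cong refl) (auto simp: real_sqrt_mult[symmetric] algebra_simps)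
  also have "\<dots> = pin S p f g" unfolding pin_def by (simp add: sum.If_cases)
  finally show ?thesis .
qed

lemma eig_orth:
  assumes rev: "\<And>x y. x\<in>S \<Longrightarrow> y\<in>S \<Longrightarrow> p x * P x y = p y * P y x"
    and e1: "\<And>x. x\<in>S \<Longrightarrow> Pf S P f x = l1 * f x"
    and e2: "\<And>x. x\<in>S \<Longrightarrow> Pf S P g x = l2 * g x"
    and ne: "l1 \<noteq> l2"
  shows "pin S p f g = 0"
proof -
  have "l1 * pin S p f g = pin S p (Pf S P f) g"
    by (subst pin_cong[of S "Pf S P f" "\<lambda>x. l1 * f x" g g]) (auto simp: e1 pin_scale_left)
  also have "\<dots> = pin S p f (Pf S P g)" by (rule pin_Pf_sym[OF rev])
  also have "\<dots> = l2 * pin S p f g"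
    by (subst pin_cong[of S f f "Pf S P g" "\<lambda>x. l2 * g x"]) (auto simp: e2 pin_scale_right)
  finally show ?thesis using ne by simp
qed

lemma eig_finite:
  fixes S :: "'s::finite set"
  assumes pos: "\<And>x. x\<in>S \<Longrightarrow> p x > 0"
    and rev: "\<And>x y. x\<in>S \<Longrightarrow> y\<in>S \<Longrightarrow> p x * P x y = p y * P y x"
  shows "finite {l. is_eigenvalue S P l}"
proof -
  let ?L = "{l. is_eigenvalue S P l}"
  define ev where "ev l = (SOME f. is_eigenvector S P l f)" for l
  have ev: "is_eigenvector S P l (ev l)" if "l \<in> ?L" for l
  proof -
    from that obtain f where "is_eigenvector S P l f" unfolding is_eigenvalue_def by auto
    thus ?thesis unfolding ev_def by (rule someI[where P="is_eigenvector S P l"])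
  qed
  have evE: "\<And>x. x\<in>S \<Longrightarrow> Pf S P (ev l) x = l * ev l x" if "l \<in> ?L" for l
    using ev[OF that] unfolding is_eigenvector_def Pf_def by auto
  define F where "F l = emb S p (ev l)" for l
  have pn: "\<And>x. x\<in>S \<Longrightarrow> p x \<ge> 0" using pos less_imp_le by blast
  have nn: "inner (F l) (F l) > 0" if lL: "l \<in> ?L" for l
  proof -
    obtain x0 where "x0 \<in> S" "ev l x0 \<noteq> 0" using ev[OF lL] unfolding is_eigenvector_def by auto
    hence "pin S p (ev l) (ev l) > 0" using pin_pos[of S p x0 "ev l"] pos by auto
    moreover have "inner (F l) (F l) = pin S p (ev l) (ev l)" unfolding F_def by (rule inner_emb[OF pn])
    ultimately show ?thesis by linarith
  qed
  have orth: "inner (F l1) (F l2) = 0" if "l1 \<in> ?L" "l2 \<in> ?L" "l1 \<noteq> l2" for l1 l2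
  proof -
    have "pin S p (ev l1) (ev l2) = 0"
      by (rule eig_orth[OF rev evE[OF that(1)] evE[OF that(2)] that(3)])
    moreover have "inner (F l1) (F l2) = pin S p (ev l1) (ev l2)" unfolding F_def by (rule inner_emb[OF pn])
    ultimately show ?thesis by linarith
  qed
  have inj: "inj_on F ?L"
  proof (rule inj_onI)
    fix l1 l2 assume h: "l1 \<in> ?L" "l2 \<in> ?L" "F l1 = F l2"
    show "l1 = l2"
    proof (rule ccontr)
      assume "l1 \<noteq> l2"
      hence "inner (F l1) (F l2) = 0" using orth h by blast
      thus False using nn[OF h(1)] h(3) by simp
    qed
  qed
  have "independent (F ` ?L)"
  proof (rule pairwise_orthogonal_independent)
    show "pairwise orthogonal (F ` ?L)"
      unfolding pairwise_def orthogonal_def using orth by fastforce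
    show "0 \<notin> F ` ?L" using nn by fastforce
  qed
  hence "finite (F ` ?L)" using independent_imp_finite by blast
  thus ?thesis using finite_imageD inj by blast
qed



lemma pin_cong_S: "(\<And>x. x\<in>S \<Longrightarrow> f x = f' x) \<Longrightarrow> (\<And>x. x\<in>S \<Longrightarrow> g x = g' x) \<Longrightarrow> pin S p f g = pin S p f' g'"
  by (rule pin_cong)

lemma abs_le_sq: "\<bar>t::real\<bar> \<le> 1 + t^2"
proof -
  have "0 \<le> (\<bar>t\<bar> - 1)^2" by simp
  also have "\<dots> = t^2 - 2 * \<bar>t\<bar> + 1" by (simp add: power2_diff)
  finally show ?thesis by simp
qed

lemma D_closed:
  fixes S :: "'s::finite set"
  shows "closed {x::real^'s. (\<forall>i. i \<notin> S \<longrightarrow> x$i = 0) \<and> pin S p (\<lambda>i. x$i) (\<lambda>_. 1) = 0 \<and> pin S p (\<lambda>i. x$i) (\<lambda>i. x$i) = 1}"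
proof (intro closed_Collect_conj closed_Collect_all)
  fix i
  show "closed {x::real^'s. i \<notin> S \<longrightarrow> x$i = 0}"
  proof (cases "i \<in> S")
    case True thus ?thesis by simp
  next
    case False thus ?thesis by (simp add: closed_Collect_eq continuous_on_component continuous_on_id)
  qed
  show "closed {x::real^'s. pin S p (\<lambda>i. x$i) (\<lambda>_. 1) = 0}"
    unfolding pin_def by (intro closed_Collect_eq continuous_intros)
  show "closed {x::real^'s. pin S p (\<lambda>i. x$i) (\<lambda>i. x$i) = 1}"
    unfolding pin_def by (intro closed_Collect_eq continuous_intros)
qed

lemma D_bounded:
  fixes S :: "'s::finite set"
  assumes pos: "\<And>x. x\<in>S \<Longrightarrow> p x > 0"
  shows "bounded {x::real^'s. (\<forall>i. i \<notin> S \<longrightarrow> x$i = 0) \<and> pin S p (\<lambda>i. x$i) (\<lambda>_. 1) = 0 \<and> pin S p (\<lambda>i. x$i) (\<lambda>i. x$i) = 1}"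
  unfolding bounded_iff
proof (intro exI ballI)
  fix x :: "real^'s"
  assume x: "x \<in> {x::real^'s. (\<forall>i. i \<notin> S \<longrightarrow> x$i = 0) \<and> pin S p (\<lambda>i. x$i) (\<lambda>_. 1) = 0 \<and> pin S p (\<lambda>i. x$i) (\<lambda>i. x$i) = 1}"
  have b: "\<bar>x$i\<bar> \<le> (if i \<in> S then 1 + 1 / p i else 0)" for i
  proof (cases "i \<in> S")
    case False thus ?thesis using x by auto
  next
    case True
    have "p i * x$i * x$i \<le> pin S p (\<lambda>i. x$i) (\<lambda>i. x$i)"
      unfolding pin_def
    proof (rule member_le_sum)
      fix j assume "j \<in> S - {i}"
      hence "p j \<ge> 0" using pos by (simp add: less_imp_le)
      thus "0 \<le> p j * x$j * x$j" by (simp add: mult.assoc)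
    qed (use True in auto)
    hence "p i * (x$i)^2 \<le> 1" using x by (simp add: power2_eq_square mult.assoc)
    hence "(x$i)^2 \<le> 1 / p i" using pos[OF True] by (simp add: field_simps)
    moreover have "\<bar>x$i\<bar> \<le> 1 + (x$i)^2"
      by (rule abs_le_sq)
    ultimately show ?thesis using True by simp
  qed
  have "norm x \<le> (\<Sum>i\<in>UNIV. \<bar>x$i\<bar>)" by (rule norm_le_l1_cart)
  also have "\<dots> \<le> (\<Sum>i\<in>UNIV. if i \<in> S then 1 + 1 / p i else 0)" by (rule sum_mono) (rule b)
  finally show "norm x \<le> (\<Sum>i\<in>UNIV. if i \<in> S then 1 + 1 / p i else 0)" .
qed



lemma pin_delta: "a \<in> S \<Longrightarrow> finite S \<Longrightarrow> pin S p (\<lambda>i. if i = a then c else 0) g = p a * c * g a"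
proof -
  assume a: "a \<in> S" "finite S"
  have "(\<Sum>i\<in>S. p i * (if i = a then c else 0) * g i) = (\<Sum>i\<in>S. if i = a then p a * c * g a else 0)"
    by (rule sum.cong) auto
  thus ?thesis unfolding pin_def using a by simp
qed

lemma pin_zero_right: "pin S p f (\<lambda>_. 0) = 0" unfolding pin_def by simp

lemma normalize_in_D:
  fixes S :: "'s::finite set" and h :: "'s \<Rightarrow> real"
  assumes M: "pin S p h (\<lambda>_. 1) = 0" and N: "pin S p h h > 0"
  defines "z \<equiv> (\<chi> i. if i \<in> S then (1 / sqrt (pin S p h h)) * h i else 0)"
  shows "z \<in> {x::real^'s. (\<forall>i. i \<notin> S \<longrightarrow> x$i = 0) \<and> pin S p (\<lambda>i. x$i) (\<lambda>_. 1) = 0 \<and> pin S p (\<lambda>i. x$i) (\<lambda>i. x$i) = 1}"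
    and "pin S p (Pf S P (\<lambda>i. z$i)) (\<lambda>i. z$i) = pin S p (Pf S P h) h / pin S p h h"
proof -
  define c where "c = 1 / sqrt (pin S p h h)"
  have zc: "\<And>i. i \<in> S \<Longrightarrow> z$i = c * h i" unfolding z_def c_def by simp
  have c2: "c * c = 1 / pin S p h h" unfolding c_def using N by (simp add: real_sqrt_mult[symmetric])
  have "pin S p (\<lambda>i. z$i) (\<lambda>_. 1) = pin S p (\<lambda>i. c * h i) (\<lambda>_. 1)" by (rule pin_cong) (auto simp: zc)
  also have "\<dots> = 0" by (simp add: pin_scale_left M)
  finally have m: "pin S p (\<lambda>i. z$i) (\<lambda>_. 1) = 0" .
  have "pin S p (\<lambda>i. z$i) (\<lambda>i. z$i) = pin S p (\<lambda>i. c * h i) (\<lambda>i. c * h i)" by (rule pin_cong) (auto simp: zc)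
  also have "\<dots> = c * c * pin S p h h" by (simp add: pin_scale_left pin_scale_right)
  also have "\<dots> = 1" using c2 N by simp
  finally have n: "pin S p (\<lambda>i. z$i) (\<lambda>i. z$i) = 1" .
  show "z \<in> {x::real^'s. (\<forall>i. i \<notin> S \<longrightarrow> x$i = 0) \<and> pin S p (\<lambda>i. x$i) (\<lambda>_. 1) = 0 \<and> pin S p (\<lambda>i. x$i) (\<lambda>i. x$i) = 1}"
  proof -
    have "\<forall>i. i \<notin> S \<longrightarrow> z$i = 0" by (simp add: z_def)
    thus ?thesis using m n by blast
  qed
  have "Pf S P (\<lambda>i. z$i) = Pf S P (\<lambda>i. c * h i)" by (rule Pf_cong) (auto simp: zc)
  hence "pin S p (Pf S P (\<lambda>i. z$i)) (\<lambda>i. z$i) = pin S p (\<lambda>x. c * Pf S P h x) (\<lambda>i. c * h i)"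
    by (simp add: Pf_scale) (rule pin_cong, auto simp: zc)
  also have "\<dots> = c * c * pin S p (Pf S P h) h" by (simp add: pin_scale_left pin_scale_right)
  finally show "pin S p (Pf S P (\<lambda>i. z$i)) (\<lambda>i. z$i) = pin S p (Pf S P h) h / pin S p h h"
    using c2 by simp
qed



lemma exists_second:
  fixes S :: "'s::finite set"
  assumes card: "card S \<ge> 2" and pos: "\<And>x. x\<in>S \<Longrightarrow> p x > 0"
    and rev: "\<And>x y. x\<in>S \<Longrightarrow> y\<in>S \<Longrightarrow> p x * P x y = p y * P y x"
    and rows: "\<And>x. x\<in>S \<Longrightarrow> (\<Sum>y\<in>S. P x y) = 1"
    and Cpos: "C > 0"
    and poinc: "\<And>f. pin S p f (\<lambda>_. 1) = 0 \<Longrightarrow> pin S p f f \<le> C * dir S p P f"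
  shows "\<exists>l f. is_eigenvector S P l f \<and> l \<le> 1 - 1 / C"
proof -
  have fin: "finite S" by simp
  define D where "D = {x::real^'s. (\<forall>i. i \<notin> S \<longrightarrow> x$i = 0) \<and> pin S p (\<lambda>i. x$i) (\<lambda>_. 1) = 0 \<and> pin S p (\<lambda>i. x$i) (\<lambda>i. x$i) = 1}"
  define q where "q f = pin S p (Pf S P f) f" for f
  have pn: "\<And>x. x\<in>S \<Longrightarrow> p x \<ge> 0" using pos less_imp_le by blast
  have Nnn: "pin S p f f \<ge> 0" for f by (rule pin_nonneg[OF pn])
  obtain a where a: "a \<in> S" using card by (metis card.empty ex_in_conv not_numeral_le_zero)
  have "card (S - {a}) \<ge> 1" using card a by simp
  then obtain b where b: "b \<in> S" "b \<noteq> a" by (metis Diff_iff card.empty ex_in_conv insertCI not_one_le_zero)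
  define f0 where "f0 = (\<lambda>i. (if i = a then 1 / p a else 0) + (-1) * (if i = b then 1 / p b else 0))"
  have "f0 a = 1 / p a" using b(2) unfolding f0_def by simp
  hence f0a: "f0 a \<noteq> 0" using pos[OF a] by simp
  have M0: "pin S p f0 (\<lambda>_. 1) = 0" unfolding f0_def pin_add_left
    using pin_delta[OF a fin] pin_delta[OF b(1) fin] pos[OF a] pos[OF b(1)] by simp
  have N0: "pin S p f0 f0 > 0" by (rule pin_pos[of S p a f0]) (use a pos f0a in auto)
  have "\<exists>z. z \<in> D" unfolding D_def by (rule exI, rule normalize_in_D(1)[OF M0 N0])
  hence Dne: "D \<noteq> {}" by auto
  have Dc: "compact D" unfolding D_def compact_eq_bounded_closed
    by (intro conjI D_bounded[of S p, OF pos] D_closed)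
  have cont: "continuous_on D (\<lambda>x. q (\<lambda>i. x$i))"
    unfolding q_def pin_def Pf_def by (intro continuous_intros)
  obtain y where yD: "y \<in> D" and ymax: "\<And>z. z \<in> D \<Longrightarrow> q (\<lambda>i. z$i) \<le> q (\<lambda>i. y$i)"
    using continuous_attains_sup[OF Dc Dne cont] by blast
  define y0 where "y0 = (\<lambda>i. y$i)"
  define lam where "lam = q y0"
  have My: "pin S p y0 (\<lambda>_. 1) = 0" and Ny: "pin S p y0 y0 = 1" using yD unfolding D_def y0_def by auto
  have ineq: "q (\<lambda>i. y0 i + t * g i) \<le> lam * pin S p (\<lambda>i. y0 i + t * g i) (\<lambda>i. y0 i + t * g i)"
    if Mg: "pin S p g (\<lambda>_. 1) = 0" for g t
  proof -
    define h where "h = (\<lambda>i. y0 i + t * g i)"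
    have Mh: "pin S p h (\<lambda>_. 1) = 0" unfolding h_def pin_add_left My Mg by simp
    have "q h \<le> lam * pin S p h h"
    proof (cases "pin S p h h = 0")
      case True
      hence "\<And>x. x \<in> S \<Longrightarrow> h x = 0" using pin_zero_imp[of S p, OF fin pos] by blast
      hence "q h = pin S p (Pf S P h) (\<lambda>_. 0)" unfolding q_def by (intro pin_cong) auto
      thus ?thesis using True by (simp add: pin_zero_right)
    next
      case False
      hence Nh: "pin S p h h > 0" using Nnn[of h] by linarith
      define z where "z = (\<chi> i. if i \<in> S then (1 / sqrt (pin S p h h)) * h i else 0)"
      have zD: "z \<in> D" unfolding D_def z_def by (rule normalize_in_D(1)[OF Mh Nh])
      have "q (\<lambda>i. z$i) = q h / pin S p h h" unfolding q_def z_def by (rule normalize_in_D(2)[OF Mh Nh])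
      hence "q h / pin S p h h \<le> lam" using ymax[OF zD] unfolding lam_def y0_def by simp
      thus ?thesis using Nh by (simp add: divide_le_eq mult.commute)
    qed
    thus ?thesis unfolding h_def .
  qed
  have sym: "pin S p (Pf S P g) y0 = pin S p (Pf S P y0) g" for g
    using pin_Pf_sym[of S p P g y0, OF rev] pin_comm[of S p] by simp
  have orth: "pin S p (Pf S P y0) g = lam * pin S p y0 g" if Mg: "pin S p g (\<lambda>_. 1) = 0" for g
  proof -
    define A where "A = pin S p (Pf S P y0) g"
    define B where "B = pin S p y0 g"
    have "(2 * (A - lam * B)) * t + (q g - lam * pin S p g g) * t^2 \<le> 0" for t
    proof -
      have e1: "q (\<lambda>i. y0 i + t * g i) = lam + 2 * t * A + t^2 * q g"
        unfolding q_def Pf_add pin_add_left pin_add_right sym[of g]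
        by (simp add: lam_def q_def A_def power2_eq_square algebra_simps)
      have e2: "pin S p (\<lambda>i. y0 i + t * g i) (\<lambda>i. y0 i + t * g i) = 1 + 2 * t * B + t^2 * pin S p g g"
        unfolding pin_add_left pin_add_right B_def Ny using pin_comm[of S p g y0]
        by (simp add: power2_eq_square algebra_simps)
      show ?thesis using ineq[OF Mg, of t] unfolding e1 e2 by (simp add: algebra_simps)
    qed
    hence "2 * (A - lam * B) = 0" by (rule quad_zero)
    thus ?thesis unfolding A_def B_def by simp
  qed
  define r where "r = (\<lambda>x. Pf S P y0 x + (- lam) * y0 x)"
  have Mr: "pin S p r (\<lambda>_. 1) = 0"
    unfolding r_def pin_add_left using stationary[of S p P y0, OF rev rows] My by simp
  have "pin S p r r = 0"
    unfolding r_def pin_add_left using orth[OF Mr[unfolded r_def]] by simp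
  hence r0: "\<And>x. x \<in> S \<Longrightarrow> Pf S P y0 x = lam * y0 x"
    using pin_zero_imp[of S p, OF fin pos] unfolding r_def by fastforce
  obtain x0 where x0: "x0 \<in> S" "y0 x0 \<noteq> 0"
  proof (rule ccontr)
    assume "\<not> thesis"
    hence "\<And>x. x \<in> S \<Longrightarrow> y0 x = 0" using that by blast
    hence "pin S p y0 y0 = pin S p y0 (\<lambda>_. 0)" by (intro pin_cong) auto
    thus False using Ny by (simp add: pin_zero_right)
  qed
  have "lam \<le> 1 - 1 / C" by (rule eig_bound[of S p P, OF fin pos rev rows Cpos poinc r0 x0 My])
  moreover have "is_eigenvector S P lam y0" unfolding is_eigenvector_def using x0 r0 by (auto simp: Pf_def)
  ultimately show ?thesis by blast
qed



lemma spectral_main: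
  fixes S :: "'s::finite set"
  assumes card: "card S \<ge> 2" and pos: "\<And>x. x\<in>S \<Longrightarrow> p x > 0"
    and rev: "\<And>x y. x\<in>S \<Longrightarrow> y\<in>S \<Longrightarrow> p x * P x y = p y * P y x"
    and rows: "\<And>x. x\<in>S \<Longrightarrow> (\<Sum>y\<in>S. P x y) = 1"
    and Cpos: "C > 0"
    and poinc: "\<And>f. pin S p f (\<lambda>_. 1) = 0 \<Longrightarrow> pin S p f f \<le> C * dir S p P f"
  shows "lambda2 S P < 1 \<and> tau2 S P \<le> C"
proof -
  have fin: "finite S" by simp
  let ?L = "{l. is_eigenvalue S P l}"
  have finL: "finite ?L" by (rule eig_finite[of S p P, OF pos rev])
  have Sne: "S \<noteq> {}" using card by auto
  have evPf: "\<And>x. x \<in> S \<Longrightarrow> Pf S P f x = l * f x" if "is_eigenvector S P l f" for l f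
    using that unfolding is_eigenvector_def Pf_def by auto
  have bnd: "l \<le> 1 - 1 / C" if ef: "is_eigenvector S P l f" and mf: "pin S p f (\<lambda>_. 1) = 0" for l f
  proof -
    obtain x0 where "x0 \<in> S" "f x0 \<noteq> 0" using ef unfolding is_eigenvector_def by auto
    thus ?thesis using eig_bound[of S p P C f l x0, OF fin pos rev rows Cpos poinc evPf[OF ef]] mf by blast
  qed
  have C1: "1 - 1 / C < 1" using Cpos by simp
  have one: "1 \<in> ?L"
  proof -
    obtain x where "x \<in> S" using Sne by auto
    hence "is_eigenvector S P 1 (\<lambda>_. 1)" unfolding is_eigenvector_def using rows by auto
    thus ?thesis unfolding is_eigenvalue_def by auto
  qed
  have alt: "l \<le> 1 - 1 / C" if lL: "l \<in> ?L" and l1: "l \<noteq> 1" for l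
  proof -
    obtain f where f: "is_eigenvector S P l f" using lL unfolding is_eigenvalue_def by auto
    have "l * pin S p f (\<lambda>_. 1) = pin S p (Pf S P f) (\<lambda>_. 1)"
      by (subst pin_cong[of S "Pf S P f" "\<lambda>x. l * f x" "\<lambda>_. 1" "\<lambda>_. 1"]) (auto simp: evPf[OF f] pin_scale_left)
    also have "\<dots> = pin S p f (\<lambda>_. 1)" by (rule stationary[of S p P, OF rev rows])
    finally have "pin S p f (\<lambda>_. 1) = 0" using l1
      by (metis mult_cancel_right1)
    thus ?thesis by (rule bnd[OF f])
  qed
  have le1: "l \<le> 1" if "l \<in> ?L" for l proof (cases "l = 1")
    case False thus ?thesis using alt[OF that False] C1 by linarith
  qed simp
  have lam1: "lambda1 S P = 1" unfolding lambda1_def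
    by (rule Max_eqI[OF finL]) (use le1 one in auto)
  have nm: "\<not> mult_ge2 S P 1"
  proof
    assume "mult_ge2 S P 1"
    then obtain f g where f: "is_eigenvector S P 1 f" and g: "is_eigenvector S P 1 g"
      and ind: "\<And>a b. (\<forall>x\<in>S. a * f x + b * g x = 0) \<Longrightarrow> a = 0 \<and> b = 0"
      unfolding mult_ge2_def by blast
    define a where "a = pin S p g (\<lambda>_. 1)"
    define b where "b = - pin S p f (\<lambda>_. 1)"
    define h where "h = (\<lambda>x. a * f x + b * g x)"
    have "pin S p h (\<lambda>_. 1) = a * pin S p f (\<lambda>_. 1) + b * pin S p g (\<lambda>_. 1)" unfolding h_def pin_def
      by (simp add: sum.distrib sum_distrib_left algebra_simps)
    hence Mh: "pin S p h (\<lambda>_. 1) = 0" unfolding a_def b_def by simp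
    show False
    proof (cases "\<exists>x\<in>S. h x \<noteq> 0")
      case True
      have "is_eigenvector S P 1 h" unfolding is_eigenvector_def
      proof (intro conjI ballI)
        show "\<exists>x\<in>S. h x \<noteq> 0" by (rule True)
        fix x assume x: "x \<in> S"
        have "(\<Sum>y\<in>S. P x y * h y) = a * Pf S P f x + b * Pf S P g x"
          unfolding h_def Pf_def by (simp add: sum.distrib sum_distrib_left algebra_simps)
        also have "\<dots> = 1 * h x" using evPf[OF f x] evPf[OF g x] by (simp add: h_def)
        finally show "(\<Sum>y\<in>S. P x y * h y) = 1 * h x" .
      qed
      from bnd[OF this Mh] C1 show False by simp
    next
      case False
      hence "a = 0 \<and> b = 0" using ind unfolding h_def by blast
      hence "pin S p f (\<lambda>_. 1) = 0" unfolding b_def by simp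
      from bnd[OF f this] C1 show False by simp
    qed
  qed
  obtain l0 f0 where l0: "is_eigenvector S P l0 f0" "l0 \<le> 1 - 1 / C"
    using exists_second[OF card pos rev rows Cpos poinc] by blast
  have l0L: "l0 \<in> ?L - {1}" using l0 C1 unfolding is_eigenvalue_def by auto
  have "lambda2 S P = Max (?L - {1})" unfolding lambda2_def lam1 using nm by simp
  also have "\<dots> \<le> 1 - 1 / C"
    by (rule Max.boundedI) (use finL l0L alt in auto)
  finally have l2: "lambda2 S P \<le> 1 - 1 / C" .
  hence "1 / C \<le> 1 - lambda2 S P" by simp
  moreover have "0 < 1 / C" using Cpos by simp
  moreover have "0 < 1 - lambda2 S P" using l2 C1 Cpos by (smt (verit) divide_pos_pos)
  ultimately have "tau2 S P \<le> 1 / (1 / C)" unfolding tau2_def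
    by (intro divide_left_mono) (auto intro!: mult_pos_pos)
  moreover have "lambda2 S P < 1" using l2 C1 by linarith
  ultimately show ?thesis using Cpos by simp
qed



lemma telescope:
  "xs \<noteq> [] \<Longrightarrow> sum_list (map (\<lambda>e. f (fst e) - f (snd e)) (zip xs (tl xs))) = (f (hd xs) - f (last xs) :: real)"
proof (induction xs)
  case Nil thus ?case by simp
next
  case (Cons a xs)
  show ?case
  proof (cases xs)
    case Nil thus ?thesis by simp
  next
    case (Cons b ys)
    have "zip (a # xs) (tl (a # xs)) = (a, b) # zip xs (tl xs)" using Cons by simp
    thus ?thesis using Cons.IH Cons by simp
  qed
qed

lemma path_ineq:
  fixes f :: "'s \<Rightarrow> real"
  assumes "xs \<noteq> []" "distinct xs"
  shows "(f (hd xs) - f (last xs))^2 \<le> real (path_len xs) * (\<Sum>e\<in>path_edges xs. (f (fst e) - f (snd e))^2)"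
proof -
  have d: "distinct (zip xs (tl xs))" by (rule distinct_zipI1[OF assms(2)])
  have "f (hd xs) - f (last xs) = (\<Sum>e\<in>path_edges xs. f (fst e) - f (snd e))"
    unfolding path_edges_def telescope[OF assms(1), symmetric] by (rule sum_list_distinct_conv_sum_set[OF d])
  moreover have "card (path_edges xs) = path_len xs"
    unfolding path_edges_def path_len_def using distinct_card[OF d] by simp
  ultimately show ?thesis using sum_squared_le_sum_of_squares[of "\<lambda>e. f (fst e) - f (snd e)" "path_edges xs"]
    by (simp add: mult.commute)
qed

lemma path_edges_sub: "set xs \<subseteq> S \<Longrightarrow> path_edges xs \<subseteq> S \<times> S"
proof
  fix e assume S: "set xs \<subseteq> S" and e: "e \<in> path_edges xs"
  obtain a b where ab: "e = (a, b)" by (cases e)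
  have "a \<in> set xs" using e ab unfolding path_edges_def by (auto dest: set_zip_leftD)
  moreover have "b \<in> set (tl xs)" using e ab unfolding path_edges_def by (auto dest: set_zip_rightD)
  hence "b \<in> set xs" by (cases xs) auto
  ultimately show "e \<in> S \<times> S" using S ab by auto
qed

lemma var_identity:
  fixes S :: "'s set"
  assumes fin: "finite S" and sp: "sum p S = 1" and m: "pin S p f (\<lambda>_. 1) = 0"
  shows "(\<Sum>x\<in>S. \<Sum>y\<in>S. p x * p y * (f x - f y)^2) = 2 * pin S p f f"
proof -
  have m': "(\<Sum>x\<in>S. p x * f x) = 0" using m unfolding pin_def by simp
  have "(\<Sum>x\<in>S. \<Sum>y\<in>S. p x * p y * (f x - f y)^2) =
        (\<Sum>x\<in>S. \<Sum>y\<in>S. p y * (p x * (f x)^2)) + (\<Sum>x\<in>S. \<Sum>y\<in>S. p x * (p y * (f y)^2))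
        - 2 * (\<Sum>x\<in>S. \<Sum>y\<in>S. (p x * f x) * (p y * f y))"
    by (simp add: power2_diff sum_subtractf sum.distrib sum_distrib_left algebra_simps)
  also have "\<dots> = 2 * pin S p f f"
    unfolding sum_distrib_left[symmetric] sum_distrib_right[symmetric] sp m' pin_def
    by (simp add: power2_eq_square mult.assoc)
  finally show ?thesis .
qed



lemma canonical_paths:
  fixes S :: "'s set" and \<Gamma> :: "'s \<Rightarrow> 's \<Rightarrow> 's list"
  assumes fin: "finite S" and pnn: "\<And>x. x \<in> S \<Longrightarrow> p x \<ge> 0" and sp: "sum p S = 1"
    and paths: "\<And>x y. x \<in> S \<Longrightarrow> y \<in> S \<Longrightarrow> \<Gamma> x y \<noteq> [] \<and> hd (\<Gamma> x y) = x \<and> last (\<Gamma> x y) = y \<and> distinct (\<Gamma> x y) \<and> set (\<Gamma> x y) \<subseteq> S"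
    and Wb: "\<And>a b. a \<in> S \<Longrightarrow> b \<in> S \<Longrightarrow> a \<noteq> b \<Longrightarrow>
        (\<Sum>q\<in>{q\<in>S \<times> S. (a, b) \<in> path_edges (\<Gamma> (fst q) (snd q))}. p (fst q) * p (snd q) * real (path_len (\<Gamma> (fst q) (snd q))))
          \<le> C * (p a * P a b)"
    and m: "pin S p f (\<lambda>_. 1) = 0"
  shows "pin S p f f \<le> C * dir S p P f"
proof -
  define D where "D e = (f (fst e) - f (snd e))^2" for e
  define L where "L q = p (fst q) * p (snd q) * real (path_len (\<Gamma> (fst q) (snd q)))" for q
  have Dnn: "D e \<ge> 0" for e unfolding D_def by simp
  have "2 * pin S p f f = (\<Sum>x\<in>S. \<Sum>y\<in>S. p x * p y * (f x - f y)^2)"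
    using var_identity[OF fin sp m] by simp
  also have "\<dots> = (\<Sum>q\<in>S \<times> S. p (fst q) * p (snd q) * (f (fst q) - f (snd q))^2)"
    by (simp add: sum.cartesian_product split_beta)
  also have "\<dots> \<le> (\<Sum>q\<in>S \<times> S. L q * (\<Sum>e\<in>path_edges (\<Gamma> (fst q) (snd q)). D e))"
  proof (rule sum_mono)
    fix q assume q: "q \<in> S \<times> S"
    obtain x y where xy: "q = (x, y)" by (cases q)
    have x: "x \<in> S" and y: "y \<in> S" using q xy by auto
    note pth = paths[OF x y]
    have "(f x - f y)^2 \<le> real (path_len (\<Gamma> x y)) * (\<Sum>e\<in>path_edges (\<Gamma> x y). D e)"
      using path_ineq[of "\<Gamma> x y" f] pth unfolding D_def by simp
    hence "p x * p y * (f x - f y)^2 \<le> p x * p y * (real (path_len (\<Gamma> x y)) * (\<Sum>e\<in>path_edges (\<Gamma> x y). D e))"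
      using pnn[OF x] pnn[OF y] by (intro mult_left_mono) auto
    thus "p (fst q) * p (snd q) * (f (fst q) - f (snd q))^2 \<le> L q * (\<Sum>e\<in>path_edges (\<Gamma> (fst q) (snd q)). D e)"
      unfolding L_def xy by (simp add: mult.assoc)
  qed
  also have "\<dots> = (\<Sum>q\<in>S \<times> S. \<Sum>e\<in>S \<times> S. if e \<in> path_edges (\<Gamma> (fst q) (snd q)) then L q * D e else 0)"
  proof (rule sum.cong[OF refl])
    fix q assume q: "q \<in> S \<times> S"
    have sub: "path_edges (\<Gamma> (fst q) (snd q)) \<subseteq> S \<times> S"
      by (rule path_edges_sub) (use paths[of "fst q" "snd q"] q in auto)
    have "(\<Sum>e\<in>S \<times> S. if e \<in> path_edges (\<Gamma> (fst q) (snd q)) then L q * D e else 0)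
        = (\<Sum>e\<in>(S \<times> S) \<inter> path_edges (\<Gamma> (fst q) (snd q)). L q * D e)"
      using fin by (simp add: sum.inter_restrict)
    also have "(S \<times> S) \<inter> path_edges (\<Gamma> (fst q) (snd q)) = path_edges (\<Gamma> (fst q) (snd q))" using sub by blast
    finally show "L q * (\<Sum>e\<in>path_edges (\<Gamma> (fst q) (snd q)). D e) =
        (\<Sum>e\<in>S \<times> S. if e \<in> path_edges (\<Gamma> (fst q) (snd q)) then L q * D e else 0)"
      by (simp add: sum_distrib_left)
  qed
  also have "\<dots> = (\<Sum>e\<in>S \<times> S. \<Sum>q\<in>S \<times> S. if e \<in> path_edges (\<Gamma> (fst q) (snd q)) then L q * D e else 0)"
    by (rule sum.swap)
  also have "\<dots> = (\<Sum>e\<in>S \<times> S. D e * (\<Sum>q\<in>{q\<in>S \<times> S. e \<in> path_edges (\<Gamma> (fst q) (snd q))}. L q))"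
  proof (rule sum.cong[OF refl])
    fix e assume e: "e \<in> S \<times> S"
    have "(\<Sum>q\<in>S \<times> S. if e \<in> path_edges (\<Gamma> (fst q) (snd q)) then L q * D e else 0)
       = (\<Sum>q\<in>{q\<in>S \<times> S. e \<in> path_edges (\<Gamma> (fst q) (snd q))}. L q * D e)"
      using fin by (simp add: sum.inter_filter)
    thus "(\<Sum>q\<in>S \<times> S. if e \<in> path_edges (\<Gamma> (fst q) (snd q)) then L q * D e else 0)
       = D e * (\<Sum>q\<in>{q\<in>S \<times> S. e \<in> path_edges (\<Gamma> (fst q) (snd q))}. L q)"
      by (simp add: sum_distrib_left mult.commute)
  qed
  also have "\<dots> \<le> (\<Sum>e\<in>S \<times> S. D e * (C * (p (fst e) * P (fst e) (snd e))))"
  proof (rule sum_mono)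
    fix e assume e: "e \<in> S \<times> S"
    obtain a b where ab: "e = (a, b)" by (cases e)
    show "D e * (\<Sum>q\<in>{q\<in>S \<times> S. e \<in> path_edges (\<Gamma> (fst q) (snd q))}. L q) \<le> D e * (C * (p (fst e) * P (fst e) (snd e)))"
    proof (cases "a = b")
      case True thus ?thesis unfolding ab D_def by simp
    next
      case False
      thus ?thesis using Wb[of a b] e ab Dnn[of e] unfolding L_def by (intro mult_left_mono) auto
    qed
  qed
  also have "\<dots> = C * (\<Sum>x\<in>S. \<Sum>y\<in>S. p x * P x y * (f x - f y)^2)"
    by (simp add: sum.cartesian_product sum_distrib_left D_def algebra_simps split_beta)
  also have "\<dots> = 2 * (C * dir S p P f)" unfolding dir_def by simp
  finally show ?thesis by simp
qed



definition rest :: "('v \<times> 'v) set \<Rightarrow> ('v \<Rightarrow> 'v \<Rightarrow> 'c \<Rightarrow> 'c \<Rightarrow> real) \<Rightarrow> 'v \<Rightarrow> ('v \<Rightarrow> 'c) \<Rightarrow> real" where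
  "rest E \<alpha> v \<sigma> = (\<Prod>(x, y)\<in>E - {e\<in>E. fst e = v \<or> snd e = v}. \<alpha> x y (\<sigma> x) (\<sigma> y))"

lemma cw_self: "cond_weight E \<alpha> v (\<sigma> v) \<sigma> = (\<Prod>(x, y)\<in>{e\<in>E. fst e = v \<or> snd e = v}. \<alpha> x y (\<sigma> x) (\<sigma> y))"
  unfolding cond_weight_def by simp

lemma weight_factor:
  fixes E :: "('v::finite \<times> 'v) set"
  shows "weight E \<alpha> \<sigma> = cond_weight E \<alpha> v (\<sigma> v) \<sigma> * rest E \<alpha> v \<sigma>"
proof -
  have "finite E" by simp
  have "weight E \<alpha> \<sigma> = (\<Prod>(x, y)\<in>E - {e\<in>E. fst e = v \<or> snd e = v}. \<alpha> x y (\<sigma> x) (\<sigma> y)) *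
      (\<Prod>(x, y)\<in>{e\<in>E. fst e = v \<or> snd e = v}. \<alpha> x y (\<sigma> x) (\<sigma> y))"
    unfolding weight_def by (rule prod.subset_diff) auto
  thus ?thesis unfolding cw_self rest_def by (simp add: mult.commute)
qed

lemma cw_upd: "cond_weight E \<alpha> v a (\<sigma>(v := b)) = cond_weight E \<alpha> v a \<sigma>"
  unfolding cond_weight_def by simp

lemma rest_upd: "rest E \<alpha> v (\<sigma>(v := b)) = rest E \<alpha> v \<sigma>"
  unfolding rest_def by (intro prod.cong refl) auto

lemma weight_upd:
  fixes E :: "('v::finite \<times> 'v) set"
  shows "weight E \<alpha> (\<sigma>(v := a)) = cond_weight E \<alpha> v a \<sigma> * rest E \<alpha> v \<sigma>"
  using weight_factor[of E \<alpha> "\<sigma>(v := a)" v] by (simp add: cw_upd rest_upd)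

lemma cw_nonneg:
  assumes "\<And>v w a b. (v, w) \<in> E \<Longrightarrow> \<alpha> v w a b \<ge> 0"
  shows "cond_weight E \<alpha> v a \<sigma> \<ge> 0"
  unfolding cond_weight_def by (rule prod_nonneg) (use assms in auto)

lemma rest_nonneg:
  assumes "\<And>v w a b. (v, w) \<in> E \<Longrightarrow> \<alpha> v w a b \<ge> 0"
  shows "rest E \<alpha> v \<sigma> \<ge> 0"
  unfolding rest_def by (rule prod_nonneg) (use assms in auto)

lemma weight_nonneg:
  assumes "\<And>v w a b. (v, w) \<in> E \<Longrightarrow> \<alpha> v w a b \<ge> 0"
  shows "weight E \<alpha> \<sigma> \<ge> 0"
  unfolding weight_def by (rule prod_nonneg) (use assms in auto)

lemma heatbath_nonneg:
  assumes "\<And>v w a b. (v, w) \<in> E \<Longrightarrow> \<alpha> v w a b \<ge> 0"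
  shows "heatbath E \<alpha> \<sigma> v a \<ge> 0"
  unfolding heatbath_def using cw_nonneg[of E \<alpha>, OF assms] by (intro divide_nonneg_nonneg sum_nonneg) auto

lemma supp_iff:
  fixes E :: "('v::finite \<times> 'v) set"
  assumes "partition_fn E \<alpha> > 0"
  shows "\<sigma> \<in> supp E \<alpha> \<longleftrightarrow> weight E \<alpha> \<sigma> > 0"
  unfolding supp_def gibbs_def using assms by (simp add: zero_less_divide_iff)

lemma pos_factors:
  fixes E :: "('v::finite \<times> 'v) set"
  assumes an: "\<And>v w a b. (v, w) \<in> E \<Longrightarrow> \<alpha> v w a b \<ge> 0" and Z: "partition_fn E \<alpha> > 0"
    and s: "\<sigma> \<in> supp E \<alpha>"
  shows "rest E \<alpha> v \<sigma> > 0" "cond_weight E \<alpha> v (\<sigma> v) \<sigma> > 0"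
proof -
  have w: "cond_weight E \<alpha> v (\<sigma> v) \<sigma> * rest E \<alpha> v \<sigma> > 0"
    using s supp_iff[OF Z] weight_factor by metis
  have "rest E \<alpha> v \<sigma> \<noteq> 0" "cond_weight E \<alpha> v (\<sigma> v) \<sigma> \<noteq> 0" using w by auto
  moreover have "rest E \<alpha> v \<sigma> \<ge> 0" by (rule rest_nonneg[of E \<alpha>, OF an])
  moreover have "cond_weight E \<alpha> v (\<sigma> v) \<sigma> \<ge> 0" by (rule cw_nonneg[of E \<alpha>, OF an])
  ultimately show "rest E \<alpha> v \<sigma> > 0" "cond_weight E \<alpha> v (\<sigma> v) \<sigma> > 0" by linarith+
qed

lemma upd_supp_iff:
  fixes E :: "('v::finite \<times> 'v) set"
  assumes an: "\<And>v w a b. (v, w) \<in> E \<Longrightarrow> \<alpha> v w a b \<ge> 0" and Z: "partition_fn E \<alpha> > 0"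
    and s: "\<sigma> \<in> supp E \<alpha>"
  shows "\<sigma>(v := a) \<in> supp E \<alpha> \<longleftrightarrow> cond_weight E \<alpha> v a \<sigma> > 0"
  unfolding supp_iff[OF Z] weight_upd using pos_factors(1)[of E \<alpha>, OF an Z s, of v] cw_nonneg[of E \<alpha>, OF an, of v a \<sigma>]
  by (simp add: zero_less_mult_iff)

lemma Zv_pos:
  fixes E :: "('v::finite \<times> 'v) set"
  assumes an: "\<And>v w a b. (v, w) \<in> E \<Longrightarrow> \<alpha> v w a b \<ge> 0" and Z: "partition_fn E \<alpha> > 0"
    and s: "\<sigma> \<in> supp E \<alpha>"
  shows "(\<Sum>a'\<in>(UNIV::'c::finite set). cond_weight E \<alpha> v a' \<sigma>) > 0"
proof -
  have "0 < cond_weight E \<alpha> v (\<sigma> v) \<sigma>" by (rule pos_factors(2)[of E \<alpha>, OF an Z s])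
  also have "\<dots> \<le> (\<Sum>a'\<in>(UNIV::'c set). cond_weight E \<alpha> v a' \<sigma>)"
    by (rule member_le_sum) (use cw_nonneg[of E \<alpha>, OF an] in auto)
  finally show ?thesis .
qed

lemma Zv_upd: "(\<Sum>a'\<in>UNIV. cond_weight E \<alpha> v a' (\<sigma>(v := b))) = (\<Sum>a'\<in>UNIV. cond_weight E \<alpha> v a' \<sigma>)"
  by (simp add: cw_upd)

lemma diff_set_upd:
  assumes "c \<noteq> \<sigma> v"
  shows "{w. (\<sigma>(v := c)) w \<noteq> \<sigma> w} = {v}"
  using assms by (auto split: if_splits)

lemma glauber_upd:
  assumes "c \<noteq> \<sigma> v"
  shows "glauber E \<alpha> \<rho> \<sigma> (\<sigma>(v := c)) = \<rho> v * heatbath E \<alpha> \<sigma> v c"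
proof -
  have ne: "\<sigma>(v := c) \<noteq> \<sigma>" using assms by (metis fun_upd_same)
  have "(THE w. (\<sigma>(v := c)) w \<noteq> \<sigma> w) = v"
    using assms by (intro the_equality) (simp, metis fun_upd_other)
  thus ?thesis unfolding glauber_def glauber_off_def using ne diff_set_upd[of c \<sigma> v, OF assms] by (simp add: Let_def)
qed

lemma glauber_off_cases:
  "glauber_off E \<alpha> \<rho> \<sigma> \<tau> = 0 \<or> (\<exists>v. \<tau> v \<noteq> \<sigma> v \<and> \<tau> = \<sigma>(v := \<tau> v) \<and> glauber_off E \<alpha> \<rho> \<sigma> \<tau> = \<rho> v * heatbath E \<alpha> \<sigma> v (\<tau> v))"
proof (cases "card {v. \<tau> v \<noteq> \<sigma> v} = 1")
  case True
  then obtain v where v: "{w. \<tau> w \<noteq> \<sigma> w} = {v}" by (rule card_1_singletonE)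
  have tv: "\<tau> v \<noteq> \<sigma> v" using v by auto
  have eq: "\<tau> = \<sigma>(v := \<tau> v)"
  proof
    fix w show "\<tau> w = (\<sigma>(v := \<tau> v)) w" using v by (cases "w = v") auto
  qed
  have "(THE w. \<tau> w \<noteq> \<sigma> w) = v" using v by (intro the_equality) auto
  hence "glauber_off E \<alpha> \<rho> \<sigma> \<tau> = \<rho> v * heatbath E \<alpha> \<sigma> v (\<tau> v)"
    unfolding glauber_off_def using True by (simp add: Let_def)
  thus ?thesis using tv eq by blast
next
  case False thus ?thesis unfolding glauber_off_def by simp
qed



lemma glauber_off_nonneg:
  assumes an: "\<And>v w a b. (v, w) \<in> E \<Longrightarrow> \<alpha> v w a b \<ge> 0" and rn: "\<And>v. \<rho> v \<ge> 0"
  shows "glauber_off E \<alpha> \<rho> \<sigma> \<tau> \<ge> 0"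
  using glauber_off_cases[of E \<alpha> \<rho> \<sigma> \<tau>] heatbath_nonneg[of E \<alpha>, OF an] rn
  by (metis mult_nonneg_nonneg order_refl)

lemma off_outside:
  fixes E :: "('v::finite \<times> 'v) set" and \<alpha> :: "'v \<Rightarrow> 'v \<Rightarrow> 'c::finite \<Rightarrow> 'c \<Rightarrow> real"
  assumes an: "\<And>v w a b. (v, w) \<in> E \<Longrightarrow> \<alpha> v w a b \<ge> 0" and Z: "partition_fn E \<alpha> > 0"
    and s: "\<sigma> \<in> supp E \<alpha>" and t: "\<tau> \<notin> supp E \<alpha>"
  shows "glauber_off E \<alpha> \<rho> \<sigma> \<tau> = 0"
proof -
  { fix v assume v: "\<tau> v \<noteq> \<sigma> v" "\<tau> = \<sigma>(v := \<tau> v)"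
      "glauber_off E \<alpha> \<rho> \<sigma> \<tau> = \<rho> v * heatbath E \<alpha> \<sigma> v (\<tau> v)"
    have "\<not> cond_weight E \<alpha> v (\<tau> v) \<sigma> > 0" using upd_supp_iff[of E \<alpha>, OF an Z s, of v "\<tau> v"] v(2) t by simp
    hence "cond_weight E \<alpha> v (\<tau> v) \<sigma> = 0" using cw_nonneg[of E \<alpha>, OF an, of v "\<tau> v" \<sigma>] by linarith
    hence "glauber_off E \<alpha> \<rho> \<sigma> \<tau> = 0" using v(3) unfolding heatbath_def by simp }
  thus ?thesis using glauber_off_cases[of E \<alpha> \<rho> \<sigma> \<tau>] by blast
qed

lemma glauber_rows:
  fixes E :: "('v::finite \<times> 'v) set" and \<alpha> :: "'v \<Rightarrow> 'v \<Rightarrow> 'c::finite \<Rightarrow> 'c \<Rightarrow> real"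
  assumes an: "\<And>v w a b. (v, w) \<in> E \<Longrightarrow> \<alpha> v w a b \<ge> 0" and Z: "partition_fn E \<alpha> > 0"
    and s: "\<sigma> \<in> supp E \<alpha>"
  shows "(\<Sum>\<tau>\<in>supp E \<alpha>. glauber E \<alpha> \<rho> \<sigma> \<tau>) = 1"
proof -
  let ?S = "supp E \<alpha>"
  have fin: "finite ?S" by simp
  have "(\<Sum>\<tau>\<in>?S. glauber E \<alpha> \<rho> \<sigma> \<tau>) = glauber E \<alpha> \<rho> \<sigma> \<sigma> + (\<Sum>\<tau>\<in>?S - {\<sigma>}. glauber E \<alpha> \<rho> \<sigma> \<tau>)"
    using sum.remove[OF fin s] by blast
  also have "(\<Sum>\<tau>\<in>?S - {\<sigma>}. glauber E \<alpha> \<rho> \<sigma> \<tau>) = (\<Sum>\<tau>\<in>?S - {\<sigma>}. glauber_off E \<alpha> \<rho> \<sigma> \<tau>)"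
    by (intro sum.cong refl) (auto simp: glauber_def)
  also have "\<dots> = (\<Sum>\<tau>\<in>UNIV - {\<sigma>}. glauber_off E \<alpha> \<rho> \<sigma> \<tau>)"
    by (rule sum.mono_neutral_left) (auto intro: off_outside[OF an Z s])
  finally show ?thesis by (simp add: glauber_def)
qed

lemma glauber_rev:
  fixes E :: "('v::finite \<times> 'v) set" and \<alpha> :: "'v \<Rightarrow> 'v \<Rightarrow> 'c::finite \<Rightarrow> 'c \<Rightarrow> real"
  assumes an: "\<And>v w a b. (v, w) \<in> E \<Longrightarrow> \<alpha> v w a b \<ge> 0" and Z: "partition_fn E \<alpha> > 0"
    and s: "\<sigma> \<in> supp E \<alpha>" and t: "\<tau> \<in> supp E \<alpha>"
  shows "gibbs E \<alpha> \<sigma> * glauber E \<alpha> \<rho> \<sigma> \<tau> = gibbs E \<alpha> \<tau> * glauber E \<alpha> \<rho> \<tau> \<sigma>"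
proof (cases "\<tau> = \<sigma>")
  case True thus ?thesis by simp
next
  case ne: False
  show ?thesis
  proof (cases "\<exists>v. \<tau> = \<sigma>(v := \<tau> v)")
    case True
    then obtain v where v: "\<tau> = \<sigma>(v := \<tau> v)" by blast
    define c where "c = \<tau> v"
    have c: "c \<noteq> \<sigma> v" using v ne unfolding c_def by (metis fun_upd_triv)
    have tau: "\<tau> = \<sigma>(v := c)" using v c_def by simp
    have sig: "\<sigma> = \<tau>(v := \<sigma> v)" unfolding tau by simp
    have g1: "glauber E \<alpha> \<rho> \<sigma> \<tau> = \<rho> v * heatbath E \<alpha> \<sigma> v c"
      unfolding tau by (rule glauber_upd[of c \<sigma> v, OF c])
    have c': "\<sigma> v \<noteq> \<tau> v" using c tau by simp
    have g2: "glauber E \<alpha> \<rho> \<tau> \<sigma> = \<rho> v * heatbath E \<alpha> \<tau> v (\<sigma> v)"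
      by (subst sig, rule glauber_upd[of "\<sigma> v" \<tau> v, OF c'])
    have hb2: "heatbath E \<alpha> \<tau> v (\<sigma> v) = cond_weight E \<alpha> v (\<sigma> v) \<sigma> / (\<Sum>a'\<in>UNIV. cond_weight E \<alpha> v a' \<sigma>)"
      unfolding heatbath_def tau cw_upd by simp
    have gt: "gibbs E \<alpha> \<tau> = cond_weight E \<alpha> v c \<sigma> * rest E \<alpha> v \<sigma> / partition_fn E \<alpha>"
      unfolding gibbs_def tau weight_upd ..
    have gs: "gibbs E \<alpha> \<sigma> = cond_weight E \<alpha> v (\<sigma> v) \<sigma> * rest E \<alpha> v \<sigma> / partition_fn E \<alpha>"
      unfolding gibbs_def using weight_factor[of E \<alpha> \<sigma> v] by simp
    show ?thesis unfolding g1 g2 hb2 gt gs by (simp add: heatbath_def algebra_simps)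
  next
    case False
    have o1: "glauber_off E \<alpha> \<rho> \<sigma> \<tau> = 0" using glauber_off_cases[of E \<alpha> \<rho> \<sigma> \<tau>] False by blast
    have "\<not> (\<exists>v. \<sigma> = \<tau>(v := \<sigma> v))"
    proof
      assume "\<exists>v. \<sigma> = \<tau>(v := \<sigma> v)"
      then obtain v where v: "\<sigma> = \<tau>(v := \<sigma> v)" by blast
      have "\<tau> = \<sigma>(v := \<tau> v)"
      proof
        fix w show "\<tau> w = (\<sigma>(v := \<tau> v)) w" using v by (cases "w = v") (simp, metis fun_upd_other)
      qed
      thus False using False by blast
    qed
    hence o2: "glauber_off E \<alpha> \<rho> \<tau> \<sigma> = 0" using glauber_off_cases[of E \<alpha> \<rho> \<tau> \<sigma>] by blast
    show ?thesis using ne o1 o2 unfolding glauber_def by simp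
  qed
qed

lemma gibbs_sum:
  fixes E :: "('v::finite \<times> 'v) set" and \<alpha> :: "'v \<Rightarrow> 'v \<Rightarrow> 'c::finite \<Rightarrow> 'c \<Rightarrow> real"
  assumes an: "\<And>v w a b. (v, w) \<in> E \<Longrightarrow> \<alpha> v w a b \<ge> 0" and Z: "partition_fn E \<alpha> > 0"
  shows "sum (gibbs E \<alpha>) (supp E \<alpha>) = 1"
proof -
  have gn: "gibbs E \<alpha> \<sigma> \<ge> 0" for \<sigma>
    unfolding gibbs_def using weight_nonneg[of E \<alpha>, OF an] Z by simp
  have "sum (gibbs E \<alpha>) (supp E \<alpha>) = sum (gibbs E \<alpha>) UNIV"
    by (rule sum.mono_neutral_left) (auto simp: supp_def, metis gn order_le_less)
  also have "\<dots> = 1" unfolding gibbs_def sum_divide_distrib[symmetric] partition_fn_def[symmetric] using Z by simp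
  finally show ?thesis .
qed



lemma path_edge_trans:
  assumes "is_path S x y \<gamma>" "(a, b) \<in> path_edges \<gamma>"
  shows "trans_edge S a b"
proof -
  obtain n where n: "\<gamma> ! n = a" "tl \<gamma> ! n = b" "n < length \<gamma>" "n < length (tl \<gamma>)"
    using assms(2) unfolding path_edges_def in_set_zip by auto
  have "Suc n < length \<gamma>" using n(4) by simp
  moreover have "\<gamma> ! Suc n = b" using n(2) n(4) by (simp add: nth_tl)
  ultimately show ?thesis using assms(1) n(1) unfolding is_path_def by blast
qed

lemma glauber_gap:
  fixes E :: "('v::finite \<times> 'v) set"
    and \<alpha> :: "'v \<Rightarrow> 'v \<Rightarrow> 'c::finite \<Rightarrow> 'c \<Rightarrow> real"
    and \<Gamma> :: "('v \<Rightarrow> 'c) \<Rightarrow> ('v \<Rightarrow> 'c) \<Rightarrow> ('v \<Rightarrow> 'c) list"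
  assumes an: "\<And>v w a b. (v, w) \<in> E \<Longrightarrow> \<alpha> v w a b \<ge> 0"
    and Z: "partition_fn E \<alpha> > 0"
    and card: "card (supp E \<alpha>) \<ge> 2"
    and paths: "\<And>\<sigma> \<sigma>'. \<sigma> \<in> supp E \<alpha> \<Longrightarrow> \<sigma>' \<in> supp E \<alpha> \<Longrightarrow> is_path (supp E \<alpha>) \<sigma> \<sigma>' (\<Gamma> \<sigma> \<sigma>')"
    and rn: "\<And>v. \<rho> v \<ge> 0" and Cpos: "C > 0"
    and hyp: "\<And>\<sigma> v c. \<sigma> \<in> supp E \<alpha> \<Longrightarrow> \<sigma>(v := c) \<in> supp E \<alpha> \<Longrightarrow> c \<noteq> \<sigma> v \<Longrightarrow>
        congestion E \<alpha> \<Gamma> (\<sigma>, \<sigma>(v := c)) \<le> C * (gibbs E \<alpha> \<sigma> * glauber E \<alpha> \<rho> \<sigma> (\<sigma>(v := c)))"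
  shows "lambda2 (supp E \<alpha>) (glauber E \<alpha> \<rho>) < 1 \<and> tau2 (supp E \<alpha>) (glauber E \<alpha> \<rho>) \<le> C"
proof -
  let ?S = "supp E \<alpha>" and ?p = "gibbs E \<alpha>" and ?P = "glauber E \<alpha> \<rho>"
  have fin: "finite ?S" by simp
  have pos: "\<And>x. x \<in> ?S \<Longrightarrow> ?p x > 0" unfolding supp_def by simp
  have pnn: "\<And>x. x \<in> ?S \<Longrightarrow> ?p x \<ge> 0" using pos less_imp_le by blast
  have rev: "\<And>x y. x \<in> ?S \<Longrightarrow> y \<in> ?S \<Longrightarrow> ?p x * ?P x y = ?p y * ?P y x"
    by (rule glauber_rev[of E \<alpha>, OF an Z])
  have rows: "\<And>x. x \<in> ?S \<Longrightarrow> (\<Sum>y\<in>?S. ?P x y) = 1"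
    by (rule glauber_rows[of E \<alpha>, OF an Z])
  have sp: "sum ?p ?S = 1" by (rule gibbs_sum[of E \<alpha>, OF an Z])
  have pths: "\<Gamma> x y \<noteq> [] \<and> hd (\<Gamma> x y) = x \<and> last (\<Gamma> x y) = y \<and> distinct (\<Gamma> x y) \<and> set (\<Gamma> x y) \<subseteq> ?S"
    if "x \<in> ?S" "y \<in> ?S" for x y using paths[OF that] unfolding is_path_def by blast
  have Wb: "(\<Sum>q\<in>{q\<in>?S \<times> ?S. (a, b) \<in> path_edges (\<Gamma> (fst q) (snd q))}. ?p (fst q) * ?p (snd q) * real (path_len (\<Gamma> (fst q) (snd q))))
          \<le> C * (?p a * ?P a b)" if ab: "a \<in> ?S" "b \<in> ?S" "a \<noteq> b" for a b
  proof (cases "{q\<in>?S \<times> ?S. (a, b) \<in> path_edges (\<Gamma> (fst q) (snd q))} = {}")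
    case True
    have "?P a b \<ge> 0" using ab(3) glauber_off_nonneg[of E \<alpha> \<rho>, OF an rn] unfolding glauber_def by auto
    hence "0 \<le> C * (?p a * ?P a b)" using Cpos pnn[OF ab(1)] by simp
    thus ?thesis unfolding True by simp
  next
    case False
    then obtain q where q: "q \<in> ?S \<times> ?S" "(a, b) \<in> path_edges (\<Gamma> (fst q) (snd q))" by blast
    have "is_path ?S (fst q) (snd q) (\<Gamma> (fst q) (snd q))" using q(1) paths by auto
    hence "trans_edge ?S a b" using q(2) by (rule path_edge_trans)
    then obtain v where v: "b = a(v := b v)" unfolding trans_edge_def by blast
    have c: "b v \<noteq> a v" using v ab(3) by (metis fun_upd_triv)
    have "congestion E \<alpha> \<Gamma> (a, a(v := b v)) \<le> C * (?p a * ?P a (a(v := b v)))"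
      by (rule hyp) (use ab v c in auto)
    thus ?thesis using v[symmetric] unfolding congestion_def by simp
  qed
  have poinc: "\<And>f. pin ?S ?p f (\<lambda>_. 1) = 0 \<Longrightarrow> pin ?S ?p f f \<le> C * dir ?S ?p ?P f"
    by (rule canonical_paths[of ?S ?p \<Gamma> C ?P, OF fin pnn sp pths Wb]) auto
  show ?thesis by (rule spectral_main[OF card pos rev rows Cpos poinc])
qed



theorem proposition4:
  fixes E :: "('v::finite \<times> 'v) set"
    and \<alpha> :: "'v \<Rightarrow> 'v \<Rightarrow> 'c::finite \<Rightarrow> 'c \<Rightarrow> real"
    and \<Gamma> :: "('v \<Rightarrow> 'c) \<Rightarrow> ('v \<Rightarrow> 'c) \<Rightarrow> ('v \<Rightarrow> 'c) list"
    and B :: "'v \<Rightarrow> real"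
  assumes alpha_nonneg: "\<And>v w a b. (v, w) \<in> E \<Longrightarrow> \<alpha> v w a b \<ge> 0"
    and Z_pos: "partition_fn E \<alpha> > 0"
    and S_card: "card (supp E \<alpha>) \<ge> 2"
    and paths: "\<And>\<sigma> \<sigma>'. \<sigma> \<in> supp E \<alpha> \<Longrightarrow> \<sigma>' \<in> supp E \<alpha> \<Longrightarrow> is_path (supp E \<alpha>) \<sigma> \<sigma>' (\<Gamma> \<sigma> \<sigma>')"
    and B_pos: "\<And>v. B v > 0"
    and B_bound: "\<And>\<sigma> v a. \<sigma> \<in> supp E \<alpha> \<Longrightarrow> \<sigma>(v := a) \<in> supp E \<alpha> \<Longrightarrow> \<sigma>(v := a) \<noteq> \<sigma> \<Longrightarrow>
        congestion E \<alpha> \<Gamma> (\<sigma>, \<sigma>(v := a)) / edge_flow E \<alpha> (glauber E \<alpha> uniform_rate) (\<sigma>, \<sigma>(v := a)) \<le> B v"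
  shows "lambda2 (supp E \<alpha>) (glauber E \<alpha> uniform_rate) < 1 \<and>
         tau2 (supp E \<alpha>) (glauber E \<alpha> uniform_rate) \<le> Max (range B) \<and>
         lambda2 (supp E \<alpha>) (glauber E \<alpha> (\<lambda>v. B v / (\<Sum>u\<in>UNIV. B u))) < 1 \<and>
         tau2 (supp E \<alpha>) (glauber E \<alpha> (\<lambda>v. B v / (\<Sum>u\<in>UNIV. B u))) \<le> (\<Sum>v\<in>UNIV. B v) / real (card (UNIV :: 'v set))"
proof -
  let ?S = "supp E \<alpha>"
  define n where "n = real (card (UNIV :: 'v set))"
  have npos: "n > 0" unfolding n_def by simp
  have ur: "uniform_rate v = 1 / n" for v :: 'v unfolding uniform_rate_def n_def ..
  define SB where "SB = (\<Sum>u\<in>UNIV. B u)"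
  have SBpos: "SB > 0" unfolding SB_def using B_pos by (intro sum_pos) auto
  have base: "congestion E \<alpha> \<Gamma> (\<sigma>, \<sigma>(v := c)) \<le> B v * (gibbs E \<alpha> \<sigma> * (heatbath E \<alpha> \<sigma> v c / n))"
    if s: "\<sigma> \<in> ?S" and t: "\<sigma>(v := c) \<in> ?S" and c: "c \<noteq> \<sigma> v" for \<sigma> v c
  proof -
    have ne: "\<sigma>(v := c) \<noteq> \<sigma>" using c by (metis fun_upd_same)
    have cw: "cond_weight E \<alpha> v c \<sigma> > 0" using upd_supp_iff[of E \<alpha>, OF alpha_nonneg Z_pos s] t by simp
    have hb: "heatbath E \<alpha> \<sigma> v c > 0" unfolding heatbath_def
      using cw Zv_pos[of E \<alpha>, OF alpha_nonneg Z_pos s] by simp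
    have gp: "gibbs E \<alpha> \<sigma> > 0" using s unfolding supp_def by simp
    have fl: "edge_flow E \<alpha> (glauber E \<alpha> uniform_rate) (\<sigma>, \<sigma>(v := c)) = gibbs E \<alpha> \<sigma> * (heatbath E \<alpha> \<sigma> v c / n)"
      unfolding edge_flow_def using glauber_upd[of c \<sigma> v E \<alpha> uniform_rate, OF c] by (simp add: ur)
    have flpos: "gibbs E \<alpha> \<sigma> * (heatbath E \<alpha> \<sigma> v c / n) > 0" using gp hb npos by simp
    have "congestion E \<alpha> \<Gamma> (\<sigma>, \<sigma>(v := c)) / (gibbs E \<alpha> \<sigma> * (heatbath E \<alpha> \<sigma> v c / n)) \<le> B v"
      using B_bound[OF s t ne] unfolding fl .
    from iffD1[OF pos_divide_le_eq[OF flpos] this] show ?thesis .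
  qed
  have hbnn: "heatbath E \<alpha> \<sigma> v c \<ge> 0" for \<sigma> v c by (rule heatbath_nonneg[of E \<alpha>, OF alpha_nonneg])
  have gnn: "gibbs E \<alpha> \<sigma> \<ge> 0" if "\<sigma> \<in> ?S" for \<sigma> using that unfolding supp_def by simp
  have MB: "B v \<le> Max (range B)" for v by (rule Max_ge) auto
  have Mpos: "Max (range B) > 0" using MB[of undefined] B_pos[of undefined] by linarith
  have r1: "lambda2 ?S (glauber E \<alpha> uniform_rate) < 1 \<and> tau2 ?S (glauber E \<alpha> uniform_rate) \<le> Max (range B)"
  proof (rule glauber_gap[OF alpha_nonneg Z_pos S_card paths _ Mpos])
    show "\<And>v. uniform_rate v \<ge> 0" by (simp add: uniform_rate_def)
    fix \<sigma> v c assume s: "\<sigma> \<in> ?S" and t: "\<sigma>(v := c) \<in> ?S" and c: "c \<noteq> \<sigma> v"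
    have "congestion E \<alpha> \<Gamma> (\<sigma>, \<sigma>(v := c)) \<le> B v * (gibbs E \<alpha> \<sigma> * (heatbath E \<alpha> \<sigma> v c / n))"
      by (rule base[OF s t c])
    also have "\<dots> \<le> Max (range B) * (gibbs E \<alpha> \<sigma> * (heatbath E \<alpha> \<sigma> v c / n))"
      using MB[of v] gnn[OF s] hbnn[of \<sigma> v c] npos by (intro mult_right_mono) auto
    also have "\<dots> = Max (range B) * (gibbs E \<alpha> \<sigma> * glauber E \<alpha> uniform_rate \<sigma> (\<sigma>(v := c)))"
      using glauber_upd[of c \<sigma> v E \<alpha> uniform_rate, OF c] by (simp add: ur)
    finally show "congestion E \<alpha> \<Gamma> (\<sigma>, \<sigma>(v := c)) \<le> Max (range B) * (gibbs E \<alpha> \<sigma> * glauber E \<alpha> uniform_rate \<sigma> (\<sigma>(v := c)))" .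
  qed
  have C2: "SB / n > 0" using SBpos npos by simp
  have r2: "lambda2 ?S (glauber E \<alpha> (\<lambda>v. B v / SB)) < 1 \<and> tau2 ?S (glauber E \<alpha> (\<lambda>v. B v / SB)) \<le> SB / n"
  proof (rule glauber_gap[OF alpha_nonneg Z_pos S_card paths _ C2])
    show "\<And>v. B v / SB \<ge> 0" using B_pos SBpos by (simp add: less_imp_le)
    fix \<sigma> v c assume s: "\<sigma> \<in> ?S" and t: "\<sigma>(v := c) \<in> ?S" and c: "c \<noteq> \<sigma> v"
    have "congestion E \<alpha> \<Gamma> (\<sigma>, \<sigma>(v := c)) \<le> B v * (gibbs E \<alpha> \<sigma> * (heatbath E \<alpha> \<sigma> v c / n))"
      by (rule base[OF s t c])
    also have "\<dots> = SB / n * (gibbs E \<alpha> \<sigma> * glauber E \<alpha> (\<lambda>v. B v / SB) \<sigma> (\<sigma>(v := c)))"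
      using glauber_upd[of c \<sigma> v E \<alpha> "\<lambda>v. B v / SB", OF c] SBpos npos by simp
    finally show "congestion E \<alpha> \<Gamma> (\<sigma>, \<sigma>(v := c)) \<le> SB / n * (gibbs E \<alpha> \<sigma> * glauber E \<alpha> (\<lambda>v. B v / SB) \<sigma> (\<sigma>(v := c)))" .
  qed
  show ?thesis using r1 r2 unfolding SB_def n_def by simp
qed

end
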